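(* Let $G=(V,E)$ be a graph with colouring $f:V\to\{B,R\}$ and let $E'$ be an optimal solution to the MIRE problem on $(G,f)$. Then for every blue node $v$, exactly $\max(r(v)-b(v),0)$ edges of $E\setminus E'$ are incident to $v$, where $r(v),b(v)$ are the numbers of red and blue neighbours of $v$ in $G$.
   Context: Graphs are finite, simple and undirected. A colouring $f:V\to\{B,R\}$ partitions $V$ into the blue nodes $B=f^{-1}(B)$ and red nodes $R=f^{-1}(R)$. For an edge set $E'$ on $V$ and $v\in V$, let $b_{E'}(v)$ and $r_{E'}(v)$ be the numbers of blue and red neighbours of $v$ in $(V,E')$; write $b(v)=b_E(v)$, $r(v)=r_E(v)$. A node $v$ is under (majority) illusion in $(V,E')$ if $r_{E'}(v)>b_{E'}(v)$. Standing assumption: $|B|>|R|$. An optimal solution to MIRE is an edge set $E'\subseteq E$ such that no node is under illusion in $(V,E')$ and $|E\setminus E'|$ is minimum among all such sets. *)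

theory Defs
  imports Main
begin

datatype colour = Blue | Red

definition simple_graph :: "'a set \<Rightarrow> 'a set set \<Rightarrow> bool" where
  "simple_graph V E \<longleftrightarrow> finite V \<and> (\<forall>e\<in>E. e \<subseteq> V \<and> card e = 2)"

definition blue_nbs :: "'a set set \<Rightarrow> ('a \<Rightarrow> colour) \<Rightarrow> 'a \<Rightarrow> nat" where
  "blue_nbs E' f v = card {u. {u, v} \<in> E' \<and> f u = Blue}"

definition red_nbs :: "'a set set \<Rightarrow> ('a \<Rightarrow> colour) \<Rightarrow> 'a \<Rightarrow> nat" where
  "red_nbs E' f v = card {u. {u, v} \<in> E' \<and> f u = Red}"

definition under_illusion :: "'a set set \<Rightarrow> ('a \<Rightarrow> colour) \<Rightarrow> 'a \<Rightarrow> bool" where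
  "under_illusion E' f v \<longleftrightarrow> red_nbs E' f v > blue_nbs E' f v"

definition illusion_free :: "'a set \<Rightarrow> 'a set set \<Rightarrow> ('a \<Rightarrow> colour) \<Rightarrow> bool" where
  "illusion_free V E' f \<longleftrightarrow> (\<forall>v\<in>V. \<not> under_illusion E' f v)"

definition optimal_MIRE :: "'a set \<Rightarrow> 'a set set \<Rightarrow> ('a \<Rightarrow> colour) \<Rightarrow> 'a set set \<Rightarrow> bool" where
  "optimal_MIRE V E f E' \<longleftrightarrow> E' \<subseteq> E \<and> illusion_free V E' f \<and>
     (\<forall>E''. E'' \<subseteq> E \<and> illusion_free V E'' f \<longrightarrow> card (E - E') \<le> card (E - E''))"

end

theory Submission
  imports Defs
begin

lemma nbs_sub:
  assumes "simple_graph V E" "E2 \<subseteq> E"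
  shows "{u. {u,w} \<in> E2 \<and> P u} \<subseteq> V"
proof
  fix u assume "u \<in> {u. {u,w} \<in> E2 \<and> P u}"
  hence "{u,w} \<in> E" using assms(2) by auto
  thus "u \<in> V" using assms(1) unfolding simple_graph_def by auto
qed

lemma nbs_fin:
  assumes "simple_graph V E" "E2 \<subseteq> E"
  shows "finite {u. {u,w} \<in> E2 \<and> P u}"
  using nbs_sub[OF assms] assms(1) unfolding simple_graph_def by (meson finite_subset)

lemma blue_mono:
  assumes "simple_graph V E" "E1 \<subseteq> E2" "E2 \<subseteq> E"
  shows "blue_nbs E1 f w \<le> blue_nbs E2 f w"
  unfolding blue_nbs_def
  by (rule card_mono[OF nbs_fin[OF assms(1,3)]]) (use assms(2) in auto)

lemma red_insert:
  assumes "simple_graph V E" "E' \<subseteq> E" "{x,y} \<in> E"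
  shows "red_nbs (insert {x,y} E') f w \<le> red_nbs E' f w
     + (if w = y \<and> f x = Red then 1 else 0) + (if w = x \<and> f y = Red then 1 else 0)"
proof -
  have "{u. {u,w} \<in> insert {x,y} E' \<and> f u = Red} \<subseteq>
     {u. {u,w} \<in> E' \<and> f u = Red} \<union> ((if w = y \<and> f x = Red then {x} else {}) \<union> (if w = x \<and> f y = Red then {y} else {}))"
    by (auto simp: doubleton_eq_iff)
  hence "card {u. {u,w} \<in> insert {x,y} E' \<and> f u = Red} \<le> card ({u. {u,w} \<in> E' \<and> f u = Red} \<union> ((if w = y \<and> f x = Red then {x} else {}) \<union> (if w = x \<and> f y = Red then {y} else {})))"
    by (intro card_mono) (use nbs_fin[OF assms(1,2)] in auto)
  also have "\<dots> \<le> card {u. {u,w} \<in> E' \<and> f u = Red} + card ((if w = y \<and> f x = Red then {x} else {}) \<union> (if w = x \<and> f y = Red then {y} else {}))"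
    by (rule card_Un_le)
  also have "card ((if w = y \<and> f x = Red then {x} else {}) \<union> (if w = x \<and> f y = Red then {y} else {})) \<le>
     card (if w = y \<and> f x = Red then {x} else {}) + card (if w = x \<and> f y = Red then {y} else {})"
    by (rule card_Un_le)
  finally have "card {u. {u,w} \<in> insert {x,y} E' \<and> f u = Red} \<le> card {u. {u,w} \<in> E' \<and> f u = Red}
     + (card (if w = y \<and> f x = Red then {x} else {}) + card (if w = x \<and> f y = Red then {y} else {}))"
    by simp
  moreover have "card (if w = y \<and> f x = Red then {x} else {}) \<le> (if w = y \<and> f x = Red then 1 else 0)" by simp
  moreover have "card (if w = x \<and> f y = Red then {y} else {}) \<le> (if w = x \<and> f y = Red then 1 else 0)" by simp
  ultimately show ?thesis unfolding red_nbs_def by linarith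
qed

lemma no_improve:
  assumes "simple_graph V E" "optimal_MIRE V E f E'" "e \<in> E - E'"
    "illusion_free V (insert e E') f"
  shows False
proof -
  have "E \<subseteq> Pow V" using assms(1) unfolding simple_graph_def by auto
  moreover have "finite V" using assms(1) unfolding simple_graph_def by simp
  ultimately have fin: "finite E" using finite_subset by blast
  have "E - insert e E' = (E - E') - {e}" by auto
  hence "card (E - insert e E') < card (E - E')"
    using fin assms(3) card_Diff1_less[of "E - E'" e] by simp
  moreover have "insert e E' \<subseteq> E" using assms(2,3) unfolding optimal_MIRE_def by auto
  ultimately show False using assms(2,4) unfolding optimal_MIRE_def
    by (meson not_le)
qed

theorem mainTheorem4:
  fixes V :: "'a set" and E E' :: "'a set set" and f :: "'a \<Rightarrow> colour"
  assumes "simple_graph V E"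
    and "card {v\<in>V. f v = Blue} > card {v\<in>V. f v = Red}"
    and "optimal_MIRE V E f E'"
  shows "\<forall>v\<in>V. f v = Blue \<longrightarrow>
           int (card {e\<in>E - E'. v \<in> e}) = max (int (red_nbs E f v) - int (blue_nbs E f v)) 0"
proof (intro ballI impI)
  fix v assume vV: "v \<in> V" and bv: "f v = Blue"
  have sg: "simple_graph V E" by fact
  have EE: "E' \<subseteq> E" and ifr: "illusion_free V E' f"
    using assms(3) unfolding optimal_MIRE_def by auto
  have edge: "\<exists>x y. e = {x,y} \<and> x \<noteq> y" if "e \<in> E" for e
  proof -
    have "card e = 2" using sg that unfolding simple_graph_def by auto
    thus ?thesis by (simp add: card_2_iff)
  qed
  have A: False if "{x,y} \<in> E - E'" "f x = Blue" "f y = Blue" for x y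
  proof (rule no_improve[OF sg assms(3) that(1)])
    show "illusion_free V (insert {x,y} E') f"
      unfolding illusion_free_def under_illusion_def
    proof (intro ballI notI)
      fix w assume "w \<in> V" and lt: "blue_nbs (insert {x, y} E') f w < red_nbs (insert {x, y} E') f w"
      have "red_nbs (insert {x,y} E') f w \<le> red_nbs E' f w"
        using red_insert[OF sg EE, of x y f w] that by auto
      moreover have "blue_nbs E' f w \<le> blue_nbs (insert {x,y} E') f w"
        by (rule blue_mono[OF sg]) (use that EE in auto)
      moreover have "red_nbs E' f w \<le> blue_nbs E' f w"
        using ifr \<open>w \<in> V\<close> unfolding illusion_free_def under_illusion_def by auto
      ultimately show False using lt by linarith
    qed
  qed
  define Rm where "Rm = {u. {u,v} \<in> E \<and> f u = Red}"
  define Rk where "Rk = {u. {u,v} \<in> E' \<and> f u = Red}"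
  have finRm: "finite Rm" unfolding Rm_def by (rule nbs_fin[OF sg]) auto
  have RkRm: "Rk \<subseteq> Rm" using EE unfolding Rm_def Rk_def by auto
  have blue_eq: "blue_nbs E' f v = blue_nbs E f v"
  proof -
    have "{u. {u,v} \<in> E' \<and> f u = Blue} = {u. {u,v} \<in> E \<and> f u = Blue}"
      using EE A bv by blast
    thus ?thesis unfolding blue_nbs_def by simp
  qed
  have "bij_betw (\<lambda>u. {u,v}) (Rm - Rk) {e\<in>E - E'. v \<in> e}"
  proof (rule bij_betwI')
    show "({x, v} = {y, v}) = (x = y)" for x y by (auto simp: doubleton_eq_iff)
    show "{x, v} \<in> {e \<in> E - E'. v \<in> e}" if "x \<in> Rm - Rk" for x
      using that unfolding Rm_def Rk_def by auto
    show "\<exists>x\<in>Rm - Rk. e = {x, v}" if "e \<in> {e \<in> E - E'. v \<in> e}" for e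
    proof -
      from that edge obtain x y where e: "e = {x,y}" "x \<noteq> y" by blast
      have "v \<in> e" using that by simp
      then obtain u where u: "e = {u,v}"
      proof (cases "v = x")
        case True then show ?thesis using e that(1)[of y] by (simp add: insert_commute)
      next
        case False then have "v = y" using e \<open>v \<in> e\<close> by simp
        then show ?thesis using e that(1)[of x] by simp
      qed
      have "f u = Red"
      proof (rule ccontr)
        assume "f u \<noteq> Red" hence "f u = Blue" by (cases "f u") auto
        have "{u,v} \<in> E - E'" using u that by simp
        thus False using A[of u v] bv \<open>f u = Blue\<close> by blast
      qed
      thus ?thesis using u that unfolding Rm_def Rk_def by auto
    qed
  qed
  hence "card (Rm - Rk) = card {e\<in>E - E'. v \<in> e}" by (rule bij_betw_same_card)
  moreover have "card (Rm - Rk) = card Rm - card Rk"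
    by (rule card_Diff_subset[OF finite_subset[OF RkRm finRm] RkRm])
  ultimately have cD: "card {e\<in>E - E'. v \<in> e} = card Rm - card Rk" by simp
  have rE: "red_nbs E f v = card Rm" and rE': "red_nbs E' f v = card Rk"
    unfolding red_nbs_def Rm_def Rk_def by auto
  have le: "card Rk \<le> blue_nbs E f v"
    using ifr vV rE' blue_eq unfolding illusion_free_def under_illusion_def by auto
  have RkleRm: "card Rk \<le> card Rm" by (rule card_mono[OF finRm RkRm])
  show "int (card {e\<in>E - E'. v \<in> e}) = max (int (red_nbs E f v) - int (blue_nbs E f v)) 0"
  proof (cases "Rm - Rk = {}")
    case True
    hence "Rm = Rk" using RkRm by auto
    thus ?thesis using cD rE le by auto
  next
    case False
    then obtain u where u: "u \<in> Rm" "u \<notin> Rk" by auto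
    have uv: "{u,v} \<in> E - E'" and ru: "f u = Red" using u unfolding Rm_def Rk_def by auto
    have "\<not> card Rk < blue_nbs E f v"
    proof
      assume lt: "card Rk < blue_nbs E f v"
      show False
      proof (rule no_improve[OF sg assms(3) uv])
        show "illusion_free V (insert {u,v} E') f"
          unfolding illusion_free_def under_illusion_def
        proof (intro ballI notI)
          fix w assume "w \<in> V" and lt2: "blue_nbs (insert {u, v} E') f w < red_nbs (insert {u, v} E') f w"
          have r1: "red_nbs (insert {u,v} E') f w \<le> red_nbs E' f w + (if w = v then 1 else 0)"
            using red_insert[OF sg EE, of u v f w] uv bv by (auto split: if_splits)
          have b1: "blue_nbs E' f w \<le> blue_nbs (insert {u,v} E') f w"
            by (rule blue_mono[OF sg]) (use uv EE in auto)
          have i1: "red_nbs E' f w \<le> blue_nbs E' f w"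
            using ifr \<open>w \<in> V\<close> unfolding illusion_free_def under_illusion_def by auto
          show False
          proof (cases "w = v")
            case True thus False using r1 b1 lt lt2 rE' blue_eq by auto
          next
            case False thus False using r1 b1 i1 lt2 by auto
          qed
        qed
      qed
    qed
    hence "card Rk = blue_nbs E f v" using le by auto
    thus ?thesis using cD rE RkleRm by auto
  qed
qed

end
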